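(* Let $K$ be a field of characteristic $0$, $W_n=K[x_1,\dots,x_n]\langle D_{x_1},\dots,D_{x_n}\rangle$ the Weyl algebra, and $S\subseteq\{1,\dots,n\}$ non-empty. For each $j\in S$ let $L_j=\sum_{k=0}^{r_j}\ell_{j,k}D_{x_j}^k\in K[x_1,\dots,x_n]\langle D_{x_j}\rangle$ with $\ell_{j,r_j}\ne0$ and $\max_k\operatorname{tdeg}(\ell_{j,k})=d_j$. Define $C=\operatorname{lcm}_{j\in S}(\ell_{j,r_j})$, $\tilde L_j=(C/\ell_{j,r_j})L_j$, $d_C=\sum_{j\in S}d_j$, $B=\prod_{j\in S}\{0,1,\dots,r_j-1\}\subseteq\mathbb N^S$, $J=\sum_{j\in S}W_n\tilde L_j$, and for $d\in\mathbb N$, $r\in\mathbb Z$, $$\mathcal H_{d,r}=\bigoplus_{\beta\in\mathbb N^S:\ |\beta|\le r\ \text{or}\ \beta\in B}K[x_1,\dots,x_n]_{\le d}\,D_S^\beta,\qquad D_S^\beta=\prod_{j\in S}D_{x_j}^{\beta_j}.$$ Then for all $u,t\in\mathbb N$ and $v\in\mathbb Z$ with $u\ge v$, one has $C^u\mathcal H_{t,v}\subseteq\mathcal H_{t+ud_C,0}+J$. In particular, for every $\alpha\in\mathbb N^S$, $C^{|\alpha|}D_S^\alpha\in\mathcal H_{|\alpha|d_C,0}+J$.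
   Context: $K[x_1,\dots,x_n]_{\le d}$ denotes the polynomials of total degree at most $d$; in $\mathcal H_{d,r}$ polynomial coefficients are written to the left of the monomials $D_S^\beta$. $C^u\mathcal H_{t,v}$ denotes the set of products $C^uh$ in $W_n$ with $h\in\mathcal H_{t,v}$; $J$ is the left ideal of $W_n$ generated by the $\tilde L_j$, $j\in S$. $\operatorname{tdeg}$ is total degree. *)

theory Defs
  imports "HOL-Library.Poly_Mapping"
begin

text \<open>Monomials are exponent vectors; index i (1 \<le> i \<le> n) stands for x_i resp. D_{x_i}.\<close>
type_synonym monom = "nat \<Rightarrow>\<^sub>0 nat"

type_synonym 'k mpoly = "monom \<Rightarrow>\<^sub>0 'k"

text \<open>Weyl algebra elements in normal form: sum of c * x^a D^b, coefficients on the left.\<close>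
type_synonym 'k weyl = "(monom \<times> monom) \<Rightarrow>\<^sub>0 'k"

definition mdeg :: "monom \<Rightarrow> nat" where
  "mdeg a = (\<Sum>i\<in>Poly_Mapping.keys a. Poly_Mapping.lookup a i)"

definition tdeg :: "'k::zero mpoly \<Rightarrow> nat" where
  "tdeg p = Max (insert 0 (mdeg ` Poly_Mapping.keys p))"

definition is_poly_n :: "nat \<Rightarrow> 'k::zero mpoly \<Rightarrow> bool" where
  "is_poly_n n p \<longleftrightarrow> (\<forall>a\<in>Poly_Mapping.keys p. Poly_Mapping.keys a \<subseteq> {1..n})"

definition in_Wn :: "nat \<Rightarrow> 'k::zero weyl \<Rightarrow> bool" where
  "in_Wn n w \<longleftrightarrow> (\<forall>(a,b)\<in>Poly_Mapping.keys w. Poly_Mapping.keys a \<subseteq> {1..n} \<and> Poly_Mapping.keys b \<subseteq> {1..n})"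

text \<open>Product of normal monomials:
  (x^a D^b)(x^c D^e) = \<Sum>_k \<Prod>_i C(b_i,k_i) C(c_i,k_i) k_i! x^(a+c-k) D^(b+e-k),
  which is the Leibniz rule D^b x^c = \<Sum>_k C(b,k) c!/(c-k)! x^(c-k) D^(b-k).\<close>
definition weyl_mono_mult :: "monom \<times> monom \<Rightarrow> monom \<times> monom \<Rightarrow> 'k::field_char_0 weyl" where
  "weyl_mono_mult m m' = (case m of (a,b) \<Rightarrow> case m' of (c,e) \<Rightarrow>
     (\<Sum>k\<in>{k. \<forall>i. Poly_Mapping.lookup k i \<le> Poly_Mapping.lookup b i \<and> Poly_Mapping.lookup k i \<le> Poly_Mapping.lookup c i}.
        Poly_Mapping.single (a + c - k, b + e - k)
          (\<Prod>i\<in>Poly_Mapping.keys k. of_nat ((Poly_Mapping.lookup b i choose Poly_Mapping.lookup k i) * (Poly_Mapping.lookup c i choose Poly_Mapping.lookup k i)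
                                  * fact (Poly_Mapping.lookup k i)))))"

definition weyl_mult :: "'k::field_char_0 weyl \<Rightarrow> 'k weyl \<Rightarrow> 'k weyl" where
  "weyl_mult p q = (\<Sum>m\<in>Poly_Mapping.keys p. \<Sum>m'\<in>Poly_Mapping.keys q.
      Poly_Mapping.map (\<lambda>c. Poly_Mapping.lookup p m * Poly_Mapping.lookup q m' * c) (weyl_mono_mult m m'))"

definition poly_D :: "'k::zero mpoly \<Rightarrow> monom \<Rightarrow> 'k weyl" where
  "poly_D p \<beta> = Abs_poly_mapping (\<lambda>(a,b). if b = \<beta> then Poly_Mapping.lookup p a else 0)"

definition poly_to_weyl :: "'k::zero mpoly \<Rightarrow> 'k weyl" where
  "poly_to_weyl p = poly_D p 0"

definition poly_quot :: "'k::field mpoly \<Rightarrow> 'k mpoly \<Rightarrow> 'k mpoly" where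
  "poly_quot c l = (THE q. c = q * l)"

definition is_lcm_n :: "nat \<Rightarrow> 'k::field mpoly \<Rightarrow> 'a set \<Rightarrow> ('a \<Rightarrow> 'k mpoly) \<Rightarrow> bool" where
  "is_lcm_n n C S f \<longleftrightarrow> is_poly_n n C \<and> (\<forall>j\<in>S. f j dvd C) \<and>
     (\<forall>M. is_poly_n n M \<and> (\<forall>j\<in>S. f j dvd M) \<longrightarrow> C dvd M)"

definition Lop :: "(nat \<Rightarrow> nat \<Rightarrow> 'k::comm_monoid_add mpoly) \<Rightarrow> (nat \<Rightarrow> nat) \<Rightarrow> nat \<Rightarrow> 'k weyl" where
  "Lop l r j = (\<Sum>k\<le>r j. poly_D (l j k) (Poly_Mapping.single j k))"

text \<open>Hcal n S r d rr = H_{d,rr}: elements \<Sum> p_beta D_S^beta with p_beta \<in> K[x_1..x_n]_{\<le>d},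
  beta \<in> N^S with |beta| \<le> rr or beta \<in> B = \<Prod>_{j\<in>S} {0..r_j-1}.\<close>
definition Hcal :: "nat \<Rightarrow> nat set \<Rightarrow> (nat \<Rightarrow> nat) \<Rightarrow> nat \<Rightarrow> int \<Rightarrow> 'k::zero weyl set" where
  "Hcal n S r d rr = {h. \<forall>(a,b)\<in>Poly_Mapping.keys h. Poly_Mapping.keys a \<subseteq> {1..n} \<and> mdeg a \<le> d \<and> Poly_Mapping.keys b \<subseteq> S \<and>
      (int (mdeg b) \<le> rr \<or> (\<forall>j\<in>S. Poly_Mapping.lookup b j < r j))}"

definition left_ideal_gen :: "nat \<Rightarrow> nat set \<Rightarrow> (nat \<Rightarrow> 'k::field_char_0 weyl) \<Rightarrow> 'k weyl set" where
  "left_ideal_gen n S G = {\<Sum>j\<in>S. weyl_mult (w j) (G j) | w. \<forall>j\<in>S. in_Wn n (w j)}"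

end

theory Submission
  imports Defs
begin

abbreviation lk where "lk \<equiv> Poly_Mapping.lookup"
abbreviation ks where "ks \<equiv> Poly_Mapping.keys"
abbreviation sg where "sg \<equiv> Poly_Mapping.single"

definition ws :: "(nat \<Rightarrow> nat) \<Rightarrow> monom \<Rightarrow> nat" where
  "ws w a = (\<Sum>i\<in>ks a. w i * lk a i)"

lemma ws_superset: "finite F \<Longrightarrow> ks a \<subseteq> F \<Longrightarrow> ws w a = (\<Sum>i\<in>F. w i * lk a i)"
  unfolding ws_def by (rule sum.mono_neutral_left) (auto simp: in_keys_iff)

lemma ws_add: "ws w (a + b) = ws w a + ws w b"
proof -
  have f: "finite (ks a \<union> ks b)" by simp
  have "ws w (a + b) = (\<Sum>i\<in>ks a \<union> ks b. w i * lk (a+b) i)"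
    by (rule ws_superset[OF f]) (rule keys_add)
  also have "\<dots> = (\<Sum>i\<in>ks a \<union> ks b. w i * lk a i) + (\<Sum>i\<in>ks a \<union> ks b. w i * lk b i)"
    by (simp add: lookup_add distrib_left sum.distrib)
  also have "\<dots> = ws w a + ws w b"
    by (subst (1 2) ws_superset[OF f]) auto
  finally show ?thesis .
qed

lemma ws_zero [simp]: "ws w 0 = 0" by (simp add: ws_def)

lemma keys_minus_nat: "ks (a - b :: monom) \<subseteq> ks a"
  by (auto simp: in_keys_iff lookup_minus)

lemma ws_minus_le: "ws w (a - b) \<le> ws w a"
proof -
  have "ws w (a - b) = (\<Sum>i\<in>ks a. w i * lk (a - b) i)"
    using keys_minus_nat by (intro ws_superset) auto
  also have "\<dots> \<le> (\<Sum>i\<in>ks a. w i * lk a i)"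
    by (intro sum_mono) (simp add: lookup_minus)
  finally show ?thesis by (simp add: ws_def)
qed

lemma ws_minus: assumes "\<And>i. lk b i \<le> lk a i" shows "ws w (a - b) + ws w b = ws w a"
proof -
  have kb: "ks b \<subseteq> ks a"
  proof
    fix x assume "x \<in> ks b" then show "x \<in> ks a" using assms[of x] by (auto simp: in_keys_iff)
  qed
  have "ws w (a - b) + ws w b = (\<Sum>i\<in>ks a. w i * lk (a - b) i) + (\<Sum>i\<in>ks a. w i * lk b i)"
    using keys_minus_nat kb by (subst (1 2) ws_superset[of "ks a"]) auto
  also have "\<dots> = (\<Sum>i\<in>ks a. w i * lk a i)"
    unfolding sum.distrib[symmetric]
    by (intro sum.cong refl) (simp add: lookup_minus assms add_mult_distrib2[symmetric])
  finally show ?thesis by (simp add: ws_def)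
qed

lemma mdeg_ws: "mdeg a = ws (\<lambda>_. 1) a" by (simp add: mdeg_def ws_def)

lemma mdeg_add: "mdeg (a + b) = mdeg a + mdeg b" by (simp add: mdeg_ws ws_add)
lemma mdeg_zero [simp]: "mdeg 0 = 0" by (simp add: mdeg_def)
lemma mdeg_minus_le: "mdeg (a - b) \<le> mdeg a" by (simp add: mdeg_ws ws_minus_le)
lemma mdeg_minus: "(\<And>i. lk b i \<le> lk a i) \<Longrightarrow> mdeg (a - b) + mdeg b = mdeg a"
  by (simp add: mdeg_ws ws_minus)
lemma mdeg_single [simp]: "mdeg (sg j k) = k" by (simp add: mdeg_def)
lemma mdeg_eq_0: "mdeg a = 0 \<Longrightarrow> a = 0"
  unfolding mdeg_def by (metis (no_types, lifting) finite_keys in_keys_iff keys_zero subsetI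
     sum_eq_0_iff  subset_empty  poly_mapping_eqI lookup_zero)

subsection \<open>Weights of polynomials\<close>

definition wt :: "(monom \<Rightarrow> nat) \<Rightarrow> 'k::zero mpoly \<Rightarrow> nat" where
  "wt \<phi> p = Max (insert 0 (\<phi> ` ks p))"

lemma tdeg_wt: "tdeg p = wt mdeg p" by (simp add: tdeg_def wt_def)

lemma wt_ge: "k \<in> ks p \<Longrightarrow> \<phi> k \<le> wt \<phi> p"
  unfolding wt_def by (rule Max_ge) auto

lemma wt_le: "(\<And>k. k \<in> ks p \<Longrightarrow> \<phi> k \<le> D) \<Longrightarrow> wt \<phi> p \<le> D"
  unfolding wt_def by (rule Max.boundedI) auto

lemma wt_attained: assumes "p \<noteq> 0" shows "\<exists>k\<in>ks p. \<phi> k = wt \<phi> p"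
proof -
  from assms obtain k0 where k0: "k0 \<in> ks p"
    by (metis all_not_in_conv keys_eq_empty)
  have "wt \<phi> p \<in> insert 0 (\<phi> ` ks p)" unfolding wt_def by (rule Max_in) auto
  then show ?thesis
  proof
    assume "wt \<phi> p = 0" then show ?thesis using wt_ge[OF k0, of \<phi>] k0 by auto
  qed auto
qed

locale addw =
  fixes \<phi> :: "monom \<Rightarrow> nat"
  assumes add: "\<phi> (a + b) = \<phi> a + \<phi> b"
begin

lemma phi0 [simp]: "\<phi> 0 = 0" using add[of 0 0] by simp

lemma wt_mult_le: "wt \<phi> (p * q) \<le> wt \<phi> p + wt \<phi> (q :: 'k::comm_semiring_0 mpoly)"
proof (rule wt_le)
  fix k assume "k \<in> ks (p * q)"
  then obtain a b where "k = a + b" "a \<in> ks p" "b \<in> ks q" using keys_mult by blast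
  then show "\<phi> k \<le> wt \<phi> p + wt \<phi> q" using wt_ge[of a p \<phi>] wt_ge[of b q \<phi>] add by simp
qed

definition top :: "nat \<Rightarrow> 'k::zero mpoly \<Rightarrow> 'k mpoly" where
  "top D p = Abs_poly_mapping (\<lambda>k. if \<phi> k = D then lk p k else 0)"

lemma lk_top: "lk (top D p) k = (if \<phi> k = D then lk p k else 0)"
proof -
  have "finite {k. (if \<phi> k = D then lk p k else 0) \<noteq> 0}"
    by (rule finite_subset[of _ "ks p"]) (auto simp: in_keys_iff)
  then show ?thesis unfolding top_def by simp
qed

lemma wt_mult_ge:
  fixes p q :: "'k::idom mpoly"
  assumes p: "p \<noteq> 0" and q: "q \<noteq> 0"
  shows "wt \<phi> p + wt \<phi> q \<le> wt \<phi> (p * q)"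
proof -
  define D where "D = wt \<phi> p"
  define E where "E = wt \<phi> q"
  define p1 where "p1 = top D p"
  define q1 where "q1 = top E q"
  define p2 where "p2 = p - p1"
  have kp1: "\<phi> k = D" if "k \<in> ks p1" for k using that by (auto simp: p1_def in_keys_iff lk_top split: if_splits)
  have kq1: "\<phi> k = E" if "k \<in> ks q1" for k using that by (auto simp: q1_def in_keys_iff lk_top split: if_splits)
  have kp2: "\<phi> k < D" if "k \<in> ks p2" for k
  proof -
    have "lk p2 k \<noteq> 0" using that by (simp add: in_keys_iff)
    then have "\<phi> k \<noteq> D" "k \<in> ks p" by (auto simp: p2_def p1_def lookup_minus lk_top in_keys_iff split: if_splits)
    then show ?thesis using wt_ge[of k p \<phi>] D_def by simp
  qed
  have kq2: "\<phi> k < E" if "k \<in> ks (q - q1)" for k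
  proof -
    have "lk (q - q1) k \<noteq> 0" using that by (simp add: in_keys_iff)
    then have "\<phi> k \<noteq> E" "k \<in> ks q" by (auto simp: q1_def lookup_minus lk_top in_keys_iff split: if_splits)
    then show ?thesis using wt_ge[of k q \<phi>] E_def by simp
  qed
  have p1nz: "p1 \<noteq> 0"
  proof -
    obtain k where "k \<in> ks p" "\<phi> k = D" using wt_attained[OF p] D_def by metis
    then have "lk p1 k \<noteq> 0" by (simp add: p1_def lk_top in_keys_iff)
    then show ?thesis by auto
  qed
  have q1nz: "q1 \<noteq> 0"
  proof -
    obtain k where "k \<in> ks q" "\<phi> k = E" using wt_attained[OF q] E_def by metis
    then have "lk q1 k \<noteq> 0" by (simp add: q1_def lk_top in_keys_iff)
    then show ?thesis by auto
  qed
  have "p1 * q1 \<noteq> 0" using p1nz q1nz by simp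
  then obtain k where k: "k \<in> ks (p1 * q1)" by (metis all_not_in_conv keys_eq_empty)
  have phik: "\<phi> k = D + E"
  proof -
    obtain a b where "k = a + b" "a \<in> ks p1" "b \<in> ks q1" using k keys_mult[of p1 q1] by blast
    then show ?thesis using kp1 kq1 add by simp
  qed
  define rest where "rest = p1 * (q - q1) + p2 * q"
  have pq: "p * q = p1 * q1 + rest"
    unfolding rest_def p2_def by (simp add: algebra_simps)
  have "k \<notin> ks rest"
  proof
    assume "k \<in> ks rest"
    then have "k \<in> ks (p1 * (q - q1)) \<or> k \<in> ks (p2 * q)" unfolding rest_def using keys_add[of "p1 * (q - q1)" "p2 * q"] by (simp add: subset_iff)
    then show False
    proof
      assume "k \<in> ks (p1 * (q - q1))"
      then obtain a b where "k = a + b" "a \<in> ks p1" "b \<in> ks (q - q1)" using keys_mult by blast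
      then show False using kp1[of a] kq2[of b] add[of a b] phik by simp
    next
      assume "k \<in> ks (p2 * q)"
      then obtain a b where "k = a + b" "a \<in> ks p2" "b \<in> ks q" using keys_mult by blast
      then show False using kp2[of a] wt_ge[of b q \<phi>] E_def add[of a b] phik by simp
    qed
  qed
  then have "lk rest k = 0" by (simp add: in_keys_iff)
  then have "lk (p * q) k = lk (p1 * q1) k" unfolding pq lookup_add by simp
  then have "k \<in> ks (p * q)" using k by (simp add: in_keys_iff)
  then show ?thesis using wt_ge[of k "p*q" \<phi>] phik D_def E_def by simp
qed

lemma wt_dvd:
  fixes p q :: "'k::idom mpoly"
  assumes "p dvd q" "q \<noteq> 0" shows "wt \<phi> p \<le> wt \<phi> q"
proof -
  obtain z where z: "q = p * z" using assms(1) by (auto elim: dvdE)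
  then have "p \<noteq> 0" "z \<noteq> 0" using assms(2) by auto
  then show ?thesis using wt_mult_ge[of p z] z by simp
qed

lemma wt_prod_le:
  fixes f :: "'a \<Rightarrow> 'k::comm_semiring_1 mpoly"
  shows "wt \<phi> (\<Prod>i\<in>I. f i) \<le> (\<Sum>i\<in>I. wt \<phi> (f i))"
proof (induction I rule: infinite_finite_induct)
  case (infinite A) then show ?case by (simp add: wt_def)
next
  case empty then show ?case by (simp add: wt_def)
next
  case (insert x F)
  then show ?case using wt_mult_le[of "f x" "prod f F"] by simp
qed

lemma wt_power_le: "wt \<phi> ((p :: 'k::comm_semiring_1 mpoly) ^ u) \<le> u * wt \<phi> p"
  using wt_prod_le[of "\<lambda>_. p" "{..<u}"] by simp

end

lemma addw_ws: "addw (ws w)" by unfold_locales (rule ws_add)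
lemma addw_mdeg: "addw mdeg" by unfold_locales (rule mdeg_add)

definition Kset :: "monom \<Rightarrow> monom \<Rightarrow> monom set" where
  "Kset b c = {k. \<forall>i. lk k i \<le> lk b i \<and> lk k i \<le> lk c i}"

definition wcoef :: "monom \<Rightarrow> monom \<Rightarrow> monom \<Rightarrow> 'k::field_char_0" where
  "wcoef b c k = (\<Prod>i\<in>ks k. of_nat ((lk b i choose lk k i) * (lk c i choose lk k i) * fact (lk k i)))"

lemma lk_le_mdeg: "lk b i \<le> mdeg b"
proof (cases "i \<in> ks b")
  case True then show ?thesis unfolding mdeg_def by (simp add: sum.remove[OF finite_keys True])
next
  case False then show ?thesis by (simp add: in_keys_iff)
qed

lemma finite_Kset: "finite (Kset b c)"
proof -
  let ?F = "{f. \<forall>x. (x \<in> ks b \<longrightarrow> f x \<in> {..mdeg b}) \<and> (x \<notin> ks b \<longrightarrow> f x = 0)}"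
  have "finite ?F" by (rule finite_set_of_finite_funs) auto
  moreover have "lk ` Kset b c \<subseteq> ?F"
  proof
    fix f assume "f \<in> lk ` Kset b c"
    then obtain k where k: "k \<in> Kset b c" "f = lk k" by auto
    have le: "lk k x \<le> lk b x" for x using k by (auto simp: Kset_def)
    show "f \<in> ?F"
    proof (intro CollectI allI conjI impI)
      fix x show "f x \<in> {..mdeg b}" using le[of x] lk_le_mdeg[of b x] k(2) by simp
    next
      fix x assume "x \<notin> ks b" then show "f x = 0" using le[of x] k(2) by (simp add: in_keys_iff)
    qed
  qed
  ultimately have "finite (lk ` Kset b c)" by (rule finite_subset[rotated])
  then show ?thesis by (rule finite_imageD) (auto intro: inj_onI)
qed

lemma zero_Kset [simp]: "0 \<in> Kset b c" by (simp add: Kset_def)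

lemma Kset_le: "k \<in> Kset b c \<Longrightarrow> lk k i \<le> lk b i" "k \<in> Kset b c \<Longrightarrow> lk k i \<le> lk c i"
  by (auto simp: Kset_def)

lemma Kset_0_right [simp]: "Kset b 0 = {0}"
proof -
  have "k = 0" if "k \<in> Kset b 0" for k
    using that by (intro poly_mapping_eqI) (simp add: Kset_def)
  then show ?thesis by auto
qed

lemma Kset_0_left [simp]: "Kset 0 c = {0}"
proof -
  have "k = 0" if "k \<in> Kset 0 c" for k
    using that by (intro poly_mapping_eqI) (simp add: Kset_def)
  then show ?thesis by auto
qed

lemma wcoef_0 [simp]: "wcoef b c 0 = 1" by (simp add: wcoef_def)

lemma mono_mult_eq: "weyl_mono_mult (a,b) (c,e) =
   (\<Sum>k\<in>Kset b c. sg (a + c - k, b + e - k) (wcoef b c k))"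
  by (simp add: weyl_mono_mult_def Kset_def wcoef_def)

definition msc :: "'k::semiring_0 \<Rightarrow> ('a \<Rightarrow>\<^sub>0 'k) \<Rightarrow> ('a \<Rightarrow>\<^sub>0 'k)" where
  "msc s p = Poly_Mapping.map (\<lambda>c. s * c) p"

lemma lk_msc: "lk (msc s p) k = s * lk p k"
  by (simp add: msc_def map.rep_eq when_def)

lemma msc_0 [simp]: "msc 0 p = 0" by (rule poly_mapping_eqI) (simp add: lk_msc)

lemma msc_add_scal: "msc (x + y) p = msc x p + msc y p"
  by (rule poly_mapping_eqI) (simp add: lk_msc lookup_add distrib_right)

lemma msc_sum: "msc s (\<Sum>i\<in>I. f i) = (\<Sum>i\<in>I. msc s (f i))"
  by (rule poly_mapping_eqI) (simp add: lk_msc lookup_sum sum_distrib_left)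

lemma msc_single [simp]: "msc s (sg k v) = sg k (s * v)"
  by (simp add: msc_def)

lemma wm_def2: "weyl_mult p q = (\<Sum>m\<in>ks p. \<Sum>m'\<in>ks q. msc (lk p m * lk q m') (weyl_mono_mult m m'))"
  by (simp add: weyl_mult_def msc_def)

lemma wm_expand:
  assumes "finite A" "ks p \<subseteq> A" "finite B" "ks q \<subseteq> B"
  shows "weyl_mult p q = (\<Sum>m\<in>A. \<Sum>m'\<in>B. msc (lk p m * lk q m') (weyl_mono_mult m m'))"
proof -
  have "weyl_mult p q = (\<Sum>m\<in>ks p. \<Sum>m'\<in>B. msc (lk p m * lk q m') (weyl_mono_mult m m'))"
    unfolding wm_def2
    by (intro sum.cong refl sum.mono_neutral_left assms) (auto simp: in_keys_iff)
  also have "\<dots> = (\<Sum>m\<in>A. \<Sum>m'\<in>B. msc (lk p m * lk q m') (weyl_mono_mult m m'))"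
    by (intro sum.mono_neutral_left assms) (auto simp: in_keys_iff)
  finally show ?thesis .
qed

lemma pm_decomp: "p = (\<Sum>m\<in>ks p. sg m (lk p m))"
proof (rule poly_mapping_eqI)
  fix k
  have "(\<Sum>m\<in>ks p. lk (sg m (lk p m)) k) = (\<Sum>m\<in>ks p. if m = k then lk p m else 0)"
    by (intro sum.cong refl) (simp add: lookup_single when_def)
  also have "\<dots> = lk p k" by (simp add: in_keys_iff)
  finally show "lk p k = lk (\<Sum>m\<in>ks p. sg m (lk p m)) k" by (simp add: lookup_sum)
qed

lemma wm_add_left: "weyl_mult (p1 + p2) q = weyl_mult p1 q + weyl_mult p2 q"
proof -
  have *: "ks p1 \<subseteq> ks p1 \<union> ks p2" "ks p2 \<subseteq> ks p1 \<union> ks p2" "ks (p1 + p2) \<subseteq> ks p1 \<union> ks p2"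
    using keys_add[of p1 p2] by auto
  show ?thesis
    apply (subst (1 2 3) wm_expand[of "ks p1 \<union> ks p2" _ "ks q"])
    using * apply (simp_all)
    apply (simp add: lookup_add distrib_right msc_add_scal sum.distrib)
    done
qed

lemma wm_add_right: "weyl_mult p (q1 + q2) = weyl_mult p q1 + weyl_mult p q2"
proof -
  have *: "ks q1 \<subseteq> ks q1 \<union> ks q2" "ks q2 \<subseteq> ks q1 \<union> ks q2" "ks (q1 + q2) \<subseteq> ks q1 \<union> ks q2"
    using keys_add[of q1 q2] by auto
  show ?thesis
    apply (subst (1 2 3) wm_expand[of "ks p" _ "ks q1 \<union> ks q2"])
    using * apply (simp_all)
    apply (simp add: lookup_add distrib_left msc_add_scal sum.distrib)
    done
qed

lemma wm_zero_left [simp]: "weyl_mult 0 q = 0" by (simp add: weyl_mult_def)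
lemma wm_zero_right [simp]: "weyl_mult p 0 = 0" by (simp add: weyl_mult_def)

lemma wm_sum_left: "weyl_mult (\<Sum>i\<in>I. f i) q = (\<Sum>i\<in>I. weyl_mult (f i) q)"
  by (induction I rule: infinite_finite_induct) (simp_all add: wm_add_left)

lemma wm_sum_right: "weyl_mult p (\<Sum>i\<in>I. f i) = (\<Sum>i\<in>I. weyl_mult p (f i))"
  by (induction I rule: infinite_finite_induct) (simp_all add: wm_add_right)

lemma wm_uminus_right: "weyl_mult p (- q) = - weyl_mult p q"
proof -
  have "weyl_mult p q + weyl_mult p (-q) = 0" by (simp add: wm_add_right[symmetric])
  from add.inverse_unique[OF this] show ?thesis by simp
qed

lemma wm_diff_right: "weyl_mult p (q1 - q2) = weyl_mult p q1 - weyl_mult p q2"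
  using wm_add_right[of p q1 "-q2"] by (simp add: wm_uminus_right)

lemma wm_single_single: "weyl_mult (sg (a,b) x) (sg (c,e) y) =
   (\<Sum>k\<in>Kset b c. sg (a + c - k, b + e - k) (x * y * wcoef b c k))"
proof -
  have "weyl_mult (sg (a,b) x) (sg (c,e) y) = msc (x * y) (weyl_mono_mult (a,b) (c,e))"
    by (subst wm_expand[of "{(a,b)}" _ "{(c,e)}"]) auto
  then show ?thesis by (simp add: mono_mult_eq msc_sum)
qed

lemma wm_single_single_split: "weyl_mult (sg (a,b) x) (sg (c,e) y) =
   sg (a + c, b + e) (x * y) + (\<Sum>k\<in>Kset b c - {0}. sg (a + c - k, b + e - k) (x * y * wcoef b c k))"
  unfolding wm_single_single by (subst sum.remove[of _ 0]) (simp_all add: finite_Kset)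

lemma wm_single0_single: "weyl_mult (sg (a,0) x) (sg (c,e) y) = sg (a + c, e) (x * y)"
  by (simp add: wm_single_single)

lemma lk_poly_D: "lk (poly_D p \<beta>) (a, b) = (if b = \<beta> then lk p a else 0)"
proof -
  have "finite {x. (case x of (a, b) \<Rightarrow> if b = \<beta> then lk p a else 0) \<noteq> 0}"
    by (rule finite_subset[of _ "(\<lambda>a. (a,\<beta>)) ` ks p"]) (auto simp: in_keys_iff split: if_splits)
  then show ?thesis unfolding poly_D_def by simp
qed

lemma poly_D_add: "poly_D (p + q) \<beta> = poly_D p \<beta> + poly_D q \<beta>"
  by (rule poly_mapping_eqI) (auto simp: lk_poly_D lookup_add)

lemma poly_D_zero [simp]: "poly_D 0 \<beta> = 0"
  by (rule poly_mapping_eqI) (auto simp: lk_poly_D)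

lemma poly_D_single: "poly_D (sg a s) \<beta> = sg (a, \<beta>) s"
  apply (rule poly_mapping_eqI)
  subgoal for k by (cases k) (auto simp: lk_poly_D lookup_single when_def)
  done

lemma poly_D_sum: "poly_D (\<Sum>i\<in>I. f i) \<beta> = (\<Sum>i\<in>I. poly_D (f i) \<beta>)"
  by (induction I rule: infinite_finite_induct) (simp_all add: poly_D_add)

lemma poly_D_decomp: "poly_D p \<beta> = (\<Sum>a\<in>ks p. sg (a, \<beta>) (lk p a))"
  by (subst pm_decomp[of p]) (simp add: poly_D_sum poly_D_single)

lemma wm_poly_single: "weyl_mult (poly_to_weyl P) (sg (c,e) t) = (\<Sum>a\<in>ks P. sg (a + c, e) (lk P a * t))"
  unfolding poly_to_weyl_def poly_D_decomp wm_sum_left by (simp add: wm_single0_single)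

lemma mult_decomp: "(P :: 'k::comm_semiring_0 mpoly) * f = (\<Sum>a\<in>ks P. \<Sum>c\<in>ks f. sg (a + c) (lk P a * lk f c))"
  by (subst (1) pm_decomp[of P], subst (1) pm_decomp[of f]) (simp add: sum_product mult_single)

lemma wm_poly_polyD: "weyl_mult (poly_to_weyl P) (poly_D f e) = poly_D (P * f) e"
proof -
  have "weyl_mult (poly_to_weyl P) (poly_D f e) = (\<Sum>c\<in>ks f. \<Sum>a\<in>ks P. sg (a + c, e) (lk P a * lk f c))"
    unfolding poly_D_decomp[of f] wm_sum_right wm_poly_single ..
  also have "\<dots> = (\<Sum>a\<in>ks P. \<Sum>c\<in>ks f. sg (a + c, e) (lk P a * lk f c))"
    by (rule sum.swap)
  also have "\<dots> = poly_D (P * f) e"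
    by (simp add: mult_decomp poly_D_sum poly_D_single)
  finally show ?thesis .
qed

lemma add_minus_assoc_monom: assumes "\<And>i. lk k i \<le> lk c i" shows "p + (a + c - k) = p + a + c - (k :: monom)"
proof (rule poly_mapping_eqI)
  fix i show "lk (p + (a + c - k)) i = lk (p + a + c - k) i" using assms[of i] by (simp add: lookup_add lookup_minus)
qed

lemma assoc_single:
  "weyl_mult (sg (p,0) s) (weyl_mult (sg (a,b) x) (sg (c,e) y)) =
   weyl_mult (weyl_mult (sg (p,0) s) (sg (a,b) x)) (sg (c,e) y)"
proof -
  have "weyl_mult (sg (p,0) s) (weyl_mult (sg (a,b) x) (sg (c,e) y)) =
     (\<Sum>k\<in>Kset b c. sg (p + (a + c - k), b + e - k) (s * (x * y * wcoef b c k)))"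
    unfolding wm_single_single[of a b x] wm_sum_right by (simp add: wm_single0_single)
  also have "\<dots> = (\<Sum>k\<in>Kset b c. sg (p + a + c - k, b + e - k) (s * x * y * wcoef b c k))"
    by (intro sum.cong refl) (simp add: add_minus_assoc_monom Kset_le mult.assoc)
  also have "\<dots> = weyl_mult (weyl_mult (sg (p,0) s) (sg (a,b) x)) (sg (c,e) y)"
    by (simp add: wm_single0_single wm_single_single add.assoc)
  finally show ?thesis .
qed

lemma wm_decomp_left: "weyl_mult p q = (\<Sum>m\<in>ks p. weyl_mult (sg m (lk p m)) q)"
proof -
  have "weyl_mult p q = weyl_mult (\<Sum>m\<in>ks p. sg m (lk p m)) q" by (simp only: pm_decomp[symmetric])
  then show ?thesis by (simp only: wm_sum_left)
qed

lemma wm_decomp_right: "weyl_mult p q = (\<Sum>m\<in>ks q. weyl_mult p (sg m (lk q m)))"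
proof -
  have "weyl_mult p q = weyl_mult p (\<Sum>m\<in>ks q. sg m (lk q m))" by (simp only: pm_decomp[symmetric])
  then show ?thesis by (simp only: wm_sum_right)
qed

lemma wm_poly_decomp: "weyl_mult (poly_to_weyl P) q = (\<Sum>a\<in>ks P. weyl_mult (sg (a,0) (lk P a)) q)"
  by (simp only: poly_to_weyl_def poly_D_decomp wm_sum_left)

lemma wm_assoc_poly: "weyl_mult (poly_to_weyl P) (weyl_mult X Y) = weyl_mult (weyl_mult (poly_to_weyl P) X) Y"
proof -
  have "weyl_mult (poly_to_weyl P) (weyl_mult X Y) = (\<Sum>x\<in>ks X. weyl_mult (poly_to_weyl P) (weyl_mult (sg x (lk X x)) Y))"
    by (subst wm_decomp_left[of X Y]) (rule wm_sum_right)
  also have "\<dots> = (\<Sum>x\<in>ks X. \<Sum>y\<in>ks Y. weyl_mult (poly_to_weyl P) (weyl_mult (sg x (lk X x)) (sg y (lk Y y))))"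
  proof (intro sum.cong refl)
    fix x show "weyl_mult (poly_to_weyl P) (weyl_mult (sg x (lk X x)) Y) = (\<Sum>y\<in>ks Y. weyl_mult (poly_to_weyl P) (weyl_mult (sg x (lk X x)) (sg y (lk Y y))))"
      by (subst wm_decomp_right[of "sg x (lk X x)" Y]) (rule wm_sum_right)
  qed
  also have "\<dots> = (\<Sum>x\<in>ks X. \<Sum>y\<in>ks Y. \<Sum>p\<in>ks P. weyl_mult (sg (p,0) (lk P p)) (weyl_mult (sg x (lk X x)) (sg y (lk Y y))))"
    by (intro sum.cong refl) (rule wm_poly_decomp)
  also have "\<dots> = (\<Sum>x\<in>ks X. \<Sum>y\<in>ks Y. \<Sum>p\<in>ks P. weyl_mult (weyl_mult (sg (p,0) (lk P p)) (sg x (lk X x))) (sg y (lk Y y)))"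
    by (intro sum.cong refl) (metis assoc_single prod.collapse)
  also have "\<dots> = (\<Sum>y\<in>ks Y. \<Sum>x\<in>ks X. \<Sum>p\<in>ks P. weyl_mult (weyl_mult (sg (p,0) (lk P p)) (sg x (lk X x))) (sg y (lk Y y)))"
    by (rule sum.swap)
  also have "\<dots> = (\<Sum>y\<in>ks Y. \<Sum>x\<in>ks X. weyl_mult (weyl_mult (poly_to_weyl P) (sg x (lk X x))) (sg y (lk Y y)))"
  proof (intro sum.cong refl)
    fix y x show "(\<Sum>p\<in>ks P. weyl_mult (weyl_mult (sg (p,0) (lk P p)) (sg x (lk X x))) (sg y (lk Y y))) =
       weyl_mult (weyl_mult (poly_to_weyl P) (sg x (lk X x))) (sg y (lk Y y))"
      by (subst wm_poly_decomp[of P "sg x (lk X x)"]) (rule wm_sum_left[symmetric])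
  qed
  also have "\<dots> = (\<Sum>y\<in>ks Y. weyl_mult (weyl_mult (poly_to_weyl P) X) (sg y (lk Y y)))"
  proof (intro sum.cong refl)
    fix y show "(\<Sum>x\<in>ks X. weyl_mult (weyl_mult (poly_to_weyl P) (sg x (lk X x))) (sg y (lk Y y))) =
       weyl_mult (weyl_mult (poly_to_weyl P) X) (sg y (lk Y y))"
      by (subst wm_decomp_right[of "poly_to_weyl P" X]) (rule wm_sum_left[symmetric])
  qed
  also have "\<dots> = weyl_mult (weyl_mult (poly_to_weyl P) X) Y"
    by (rule wm_decomp_right[symmetric])
  finally show ?thesis .
qed

lemma wm_poly_mult: "weyl_mult (poly_to_weyl (P * Q)) X = weyl_mult (poly_to_weyl P) (weyl_mult (poly_to_weyl Q) X)"
  unfolding wm_assoc_poly by (simp only: poly_to_weyl_def wm_poly_polyD[unfolded poly_to_weyl_def])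

definition phin :: "nat \<Rightarrow> monom \<Rightarrow> nat" where
  "phin n = ws (\<lambda>i. if i \<in> {1..n} then 0 else 1)"

lemma addw_phin: "addw (phin n)" unfolding phin_def by (rule addw_ws)

lemma phin_0_iff: "phin n a = 0 \<longleftrightarrow> ks a \<subseteq> {1..n}"
  unfolding phin_def ws_def by (auto simp: in_keys_iff)

lemma polyn_wt: "is_poly_n n p \<longleftrightarrow> wt (phin n) p = 0"
proof
  assume "is_poly_n n p" then show "wt (phin n) p = 0"
    using wt_le[of p "phin n" 0] by (auto simp: is_poly_n_def phin_0_iff)
next
  assume H: "wt (phin n) p = 0"
  show "is_poly_n n p" unfolding is_poly_n_def
  proof
    fix a assume "a \<in> ks p"
    then have "phin n a = 0" using wt_ge[of a p "phin n"] H by simp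
    then show "ks a \<subseteq> {1..n}" by (simp add: phin_0_iff)
  qed
qed

lemma polyn_mult: "is_poly_n n p \<Longrightarrow> is_poly_n n q \<Longrightarrow> is_poly_n n (p * (q :: 'k::comm_semiring_0 mpoly))"
  using addw.wt_mult_le[OF addw_phin, of n p q] by (simp add: polyn_wt)

lemma polyn_prod: "(\<And>i. i \<in> I \<Longrightarrow> is_poly_n n (f i)) \<Longrightarrow> is_poly_n n (\<Prod>i\<in>I. (f i :: 'k::comm_semiring_1 mpoly))"
  using addw.wt_prod_le[OF addw_phin, of n f I] by (simp add: polyn_wt)

lemma polyn_power: "is_poly_n n p \<Longrightarrow> is_poly_n n (p ^ u :: 'k::comm_semiring_1 mpoly)"
  using addw.wt_power_le[OF addw_phin, of n p u] by (simp add: polyn_wt)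

lemma tdeg_ge: "k \<in> ks p \<Longrightarrow> mdeg k \<le> tdeg p" by (simp add: tdeg_wt wt_ge)

locale L313 =
  fixes n :: nat and S :: "nat set" and r :: "nat \<Rightarrow> nat"
    and l :: "nat \<Rightarrow> nat \<Rightarrow> 'k::field_char_0 mpoly" and C :: "'k mpoly"
  assumes S: "S \<subseteq> {1..n}" "S \<noteq> {}"
    and lpoly: "\<And>j k. j \<in> S \<Longrightarrow> k \<le> r j \<Longrightarrow> is_poly_n n (l j k)"
    and lead: "\<And>j. j \<in> S \<Longrightarrow> l j (r j) \<noteq> 0"
    and Clcm: "is_lcm_n n C S (\<lambda>j. l j (r j))"
begin

definition dd :: "nat \<Rightarrow> nat" where "dd j = Max ((\<lambda>k. tdeg (l j k)) ` {..r j})"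
definition dC :: nat where "dC = (\<Sum>j\<in>S. dd j)"
definition q :: "nat \<Rightarrow> 'k mpoly" where "q j = poly_quot C (l j (r j))"
definition G :: "nat \<Rightarrow> 'k weyl" where "G j = weyl_mult (poly_to_weyl (q j)) (Lop l r j)"
definition JJ :: "'k weyl set" where "JJ = left_ideal_gen n S G"

lemma finS: "finite S" using S(1) finite_subset by blast

lemma tdeg_l: "k \<le> r j \<Longrightarrow> tdeg (l j k) \<le> dd j"
  unfolding dd_def by (rule Max_ge) auto

definition M :: "'k mpoly" where "M = (\<Prod>j\<in>S. l j (r j))"

lemma M_nz: "M \<noteq> 0" unfolding M_def using lead finS by simp

lemma M_polyn: "is_poly_n n M" unfolding M_def by (rule polyn_prod) (simp add: lpoly)

lemma C_polyn: "is_poly_n n C" using Clcm by (simp add: is_lcm_n_def)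

lemma C_dvd_M: "C dvd M"
  using Clcm M_polyn finS by (auto simp: is_lcm_n_def M_def intro: dvd_prodI)

lemma C_nz: "C \<noteq> 0" using C_dvd_M M_nz by auto

lemma l_dvd_C: "j \<in> S \<Longrightarrow> l j (r j) dvd C" using Clcm by (simp add: is_lcm_n_def)

lemma C_eq: assumes "j \<in> S" shows "C = q j * l j (r j)"
proof -
  obtain z where z: "C = l j (r j) * z" using l_dvd_C[OF assms] by (auto elim: dvdE)
  have th: "(THE x. C = x * l j (r j)) = z"
  proof (rule the_equality)
    show "C = z * l j (r j)" using z by (simp add: mult.commute)
    fix x assume "C = x * l j (r j)"
    then show "x = z" using z lead[OF assms] by (simp add: mult.commute)
  qed
  then have "q j = z" by (simp only: q_def poly_quot_def th)
  then show ?thesis using z by (simp add: mult.commute)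
qed

lemma tdeg_C: "tdeg C \<le> dC"
proof -
  have "tdeg C \<le> tdeg M" unfolding tdeg_wt by (rule addw.wt_dvd[OF addw_mdeg C_dvd_M M_nz])
  also have "\<dots> \<le> (\<Sum>j\<in>S. tdeg (l j (r j)))" unfolding tdeg_wt M_def by (rule addw.wt_prod_le[OF addw_mdeg])
  also have "\<dots> \<le> dC" unfolding dC_def by (intro sum_mono tdeg_l) simp
  finally show ?thesis .
qed

lemma q_props: assumes j: "j \<in> S"
  shows "tdeg (q j) + dd j \<le> dC" "is_poly_n n (q j)"
proof -
  define Mj where "Mj = (\<Prod>i\<in>S - {j}. l i (r i))"
  have MMj: "M = l j (r j) * Mj" unfolding M_def Mj_def using finS j by (simp add: prod.remove)
  obtain z where z: "M = C * z" using C_dvd_M by (auto elim: dvdE)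
  have "l j (r j) * Mj = l j (r j) * (q j * z)" using MMj z C_eq[OF j] by (simp add: ac_simps)
  then have Mjq: "Mj = q j * z" using lead[OF j] by simp
  have Mjnz: "Mj \<noteq> 0" using M_nz MMj by auto
  have "tdeg (q j) \<le> tdeg Mj" unfolding tdeg_wt by (rule addw.wt_dvd[OF addw_mdeg _ Mjnz]) (simp add: Mjq)
  also have "\<dots> \<le> (\<Sum>i\<in>S - {j}. tdeg (l i (r i)))" unfolding tdeg_wt Mj_def by (rule addw.wt_prod_le[OF addw_mdeg])
  also have "\<dots> \<le> (\<Sum>i\<in>S - {j}. dd i)" by (intro sum_mono tdeg_l) simp
  finally have "tdeg (q j) + dd j \<le> (\<Sum>i\<in>S - {j}. dd i) + dd j" by simp
  also have "\<dots> = dC" unfolding dC_def using finS j by (simp add: sum.remove)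
  finally show "tdeg (q j) + dd j \<le> dC" .
  have qnz: "q j \<noteq> 0" using C_eq[OF j] C_nz by auto
  have "wt (phin n) (q j) + wt (phin n) (l j (r j)) \<le> wt (phin n) C"
    using addw.wt_mult_ge[OF addw_phin qnz lead[OF j]] C_eq[OF j] by simp
  then show "is_poly_n n (q j)" using C_polyn by (simp add: polyn_wt)
qed

lemma ql_props: assumes "j \<in> S" "k \<le> r j"
  shows "tdeg (q j * l j k) \<le> dC" "is_poly_n n (q j * l j k)"
proof -
  have "tdeg (q j * l j k) \<le> tdeg (q j) + tdeg (l j k)"
    unfolding tdeg_wt by (rule addw.wt_mult_le[OF addw_mdeg])
  then show "tdeg (q j * l j k) \<le> dC" using q_props(1)[OF assms(1)] tdeg_l[OF assms(2)] by linarith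
  show "is_poly_n n (q j * l j k)" using q_props(2)[OF assms(1)] lpoly[OF assms] by (rule polyn_mult)
qed

lemma G_eq: "G j = (\<Sum>k\<le>r j. poly_D (q j * l j k) (sg j k))"
  unfolding G_def Lop_def wm_sum_right wm_poly_polyD ..

lemma tdeg_Cu: "tdeg (C ^ u) \<le> u * dC"
proof -
  have "tdeg (C ^ u) \<le> u * tdeg C" unfolding tdeg_wt by (rule addw.wt_power_le[OF addw_mdeg])
  also have "\<dots> \<le> u * dC" using tdeg_C by simp
  finally show ?thesis .
qed

subsection \<open>The ideal\<close>

lemma J0: "0 \<in> JJ"
  unfolding JJ_def left_ideal_gen_def
  by (rule CollectI, rule exI[of _ "\<lambda>_. 0"]) (simp add: in_Wn_def)

lemma in_Wn_add: "in_Wn n w1 \<Longrightarrow> in_Wn n w2 \<Longrightarrow> in_Wn n (w1 + w2)"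
  unfolding in_Wn_def using keys_add[of w1 w2] by blast

lemma Jadd: assumes "g1 \<in> JJ" "g2 \<in> JJ" shows "g1 + g2 \<in> JJ"
proof -
  obtain w1 where w1: "g1 = (\<Sum>j\<in>S. weyl_mult (w1 j) (G j))" "\<forall>j\<in>S. in_Wn n (w1 j)"
    using assms(1) unfolding JJ_def left_ideal_gen_def by blast
  obtain w2 where w2: "g2 = (\<Sum>j\<in>S. weyl_mult (w2 j) (G j))" "\<forall>j\<in>S. in_Wn n (w2 j)"
    using assms(2) unfolding JJ_def left_ideal_gen_def by blast
  have e: "g1 + g2 = (\<Sum>j\<in>S. weyl_mult (w1 j + w2 j) (G j))"
    by (simp add: w1 w2 wm_add_left sum.distrib)
  have i: "\<forall>j\<in>S. in_Wn n (w1 j + w2 j)" using w1 w2 in_Wn_add by blast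
  show ?thesis unfolding JJ_def left_ideal_gen_def
    by (intro CollectI exI[of _ "\<lambda>j. w1 j + w2 j"] conjI e i)
qed

lemma Jsum: "(\<And>i. i \<in> I \<Longrightarrow> f i \<in> JJ) \<Longrightarrow> (\<Sum>i\<in>I. f i) \<in> JJ"
  by (induction I rule: infinite_finite_induct) (auto simp: J0 Jadd)

lemma Jgen: assumes "in_Wn n w" "j \<in> S" shows "weyl_mult w (G j) \<in> JJ"
proof -
  define w' where "w' = (\<lambda>i. if i = j then w else 0)"
  have "(\<Sum>i\<in>S. weyl_mult (w' i) (G i)) = (\<Sum>i\<in>S. if i = j then weyl_mult w (G i) else 0)"
    by (intro sum.cong refl) (simp add: w'_def)
  also have "\<dots> = weyl_mult w (G j)" using assms(2) finS by simp
  finally have "weyl_mult w (G j) = (\<Sum>i\<in>S. weyl_mult (w' i) (G i))" by simp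
  moreover have "\<forall>i\<in>S. in_Wn n (w' i)" using assms(1) by (simp add: w'_def in_Wn_def)
  ultimately show ?thesis unfolding JJ_def left_ideal_gen_def
    by (intro CollectI exI[of _ w'] conjI)
qed

end

lemma ks_sum_sub: "(\<And>i. i \<in> I \<Longrightarrow> ks (f i) \<subseteq> Q) \<Longrightarrow> ks (sum f I) \<subseteq> Q"
  using keys_sum[of f I] by blast

lemma ks_sg_sub: "k \<in> Q \<Longrightarrow> ks (sg k v) \<subseteq> Q" by simp

lemma wm_T_polyD: "weyl_mult (sg (a,\<gamma>) s) (poly_D f e) =
   (\<Sum>c\<in>ks f. \<Sum>k\<in>Kset \<gamma> c. sg (a + c - k, \<gamma> + e - k) (s * lk f c * wcoef \<gamma> c k))"
  unfolding poly_D_decomp[of f] wm_sum_right wm_single_single ..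

context L313
begin

definition HQ :: "nat \<Rightarrow> int \<Rightarrow> (monom \<times> monom) set" where
  "HQ t rr = {(a,b). ks a \<subseteq> {1..n} \<and> mdeg a \<le> t \<and> ks b \<subseteq> S \<and> (int (mdeg b) \<le> rr \<or> (\<forall>j\<in>S. lk b j < r j))}"

lemma Hcal_HQ: "h \<in> Hcal n S r t rr \<longleftrightarrow> ks h \<subseteq> HQ t rr"
  unfolding Hcal_def HQ_def by auto

lemma keys_add_sub: "ks (a + b :: monom) \<subseteq> ks a \<union> ks b" by (rule keys_add)

lemma base: assumes "(a,\<beta>) \<in> HQ t 0"
  shows "weyl_mult (poly_to_weyl (C^u)) (sg (a,\<beta>) s) \<in> Hcal n S r (t + u*dC) 0"
  unfolding Hcal_HQ wm_poly_single
proof (intro ks_sum_sub ks_sg_sub)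
  fix c assume c: "c \<in> ks (C ^ u)"
  have "ks c \<subseteq> {1..n}" using polyn_power[OF C_polyn, of u] c by (auto simp: is_poly_n_def)
  moreover have "mdeg c \<le> u * dC" using tdeg_ge[OF c] tdeg_Cu by (rule le_trans)
  ultimately show "(c + a, \<beta>) \<in> HQ (t + u * dC) 0"
    using assms keys_add_sub[of c a] by (auto simp: HQ_def mdeg_add)
qed

lemma lift:
  assumes "\<And>x. x \<in> ks h \<Longrightarrow> \<exists>h'\<in>Hcal n S r D 0. \<exists>g\<in>JJ. weyl_mult Pc (sg x (lk h x)) = h' + g"
  shows "\<exists>h'\<in>Hcal n S r D 0. \<exists>g\<in>JJ. weyl_mult Pc h = h' + g"
proof -
  have "\<forall>x\<in>ks h. \<exists>hg. fst hg \<in> Hcal n S r D 0 \<and> snd hg \<in> JJ \<and> weyl_mult Pc (sg x (lk h x)) = fst hg + snd hg"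
    using assms by fastforce
  from bchoice[OF this] obtain f where
    f: "\<forall>x\<in>ks h. fst (f x) \<in> Hcal n S r D 0 \<and> snd (f x) \<in> JJ \<and> weyl_mult Pc (sg x (lk h x)) = fst (f x) + snd (f x)"
    by blast
  have "weyl_mult Pc h = (\<Sum>x\<in>ks h. fst (f x) + snd (f x))"
    by (subst wm_decomp_right) (intro sum.cong refl, use f in blast)
  also have "\<dots> = (\<Sum>x\<in>ks h. fst (f x)) + (\<Sum>x\<in>ks h. snd (f x))" by (rule sum.distrib)
  finally have eq: "weyl_mult Pc h = (\<Sum>x\<in>ks h. fst (f x)) + (\<Sum>x\<in>ks h. snd (f x))" .
  have "(\<Sum>x\<in>ks h. fst (f x)) \<in> Hcal n S r D 0"
    unfolding Hcal_HQ by (rule ks_sum_sub) (use f Hcal_HQ in blast)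
  moreover have "(\<Sum>x\<in>ks h. snd (f x)) \<in> JJ" by (rule Jsum) (use f in blast)
  ultimately show ?thesis using eq by blast
qed

lemma elem_HQ:
  assumes "ks a \<subseteq> {1..n}" "mdeg a \<le> t" "ks c \<subseteq> {1..n}" "mdeg c \<le> dC" "ks \<delta> \<subseteq> S" "mdeg (\<delta> - \<kappa>) \<le> m"
  shows "(a + c - \<kappa>, \<delta> - \<kappa>) \<in> HQ (t + dC) (int m)"
proof -
  have "ks (a + c - \<kappa>) \<subseteq> {1..n}" using keys_minus_nat[of "a + c" \<kappa>] keys_add_sub[of a c] assms(1,3) by blast
  moreover have "mdeg (a + c - \<kappa>) \<le> t + dC" using mdeg_minus_le[of "a + c" \<kappa>] assms(2,4) by (simp add: mdeg_add)
  moreover have "ks (\<delta> - \<kappa>) \<subseteq> S" using keys_minus_nat[of \<delta> \<kappa>] assms(5) by blast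
  ultimately show ?thesis using assms(6) by (simp add: HQ_def)
qed

lemma step:
  assumes IH: "\<And>u t h. int m \<le> int u \<Longrightarrow> h \<in> Hcal n S r t (int m) \<Longrightarrow>
      \<exists>h'\<in>Hcal n S r (t + u*dC) 0. \<exists>g\<in>JJ. weyl_mult (poly_to_weyl (C^u)) h = h' + g"
    and x: "(a,\<beta>) \<in> HQ t (int (Suc m))" and nb: "(a,\<beta>) \<notin> HQ t 0" and u: "Suc m \<le> u"
  shows "\<exists>h'\<in>Hcal n S r (t + u*dC) 0. \<exists>g\<in>JJ. weyl_mult (poly_to_weyl (C^u)) (sg (a,\<beta>) s) = h' + g"
proof -
  have ka: "ks a \<subseteq> {1..n}" "mdeg a \<le> t" and kb: "ks \<beta> \<subseteq> S" and mb: "mdeg \<beta> \<le> Suc m"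
    and ex: "\<not> (\<forall>j\<in>S. lk \<beta> j < r j)"
    using x nb by (auto simp: HQ_def)
  from ex obtain j where j: "j \<in> S" "r j \<le> lk \<beta> j" by (auto simp: not_less)
  define e where "e = sg j (r j)"
  define \<gamma> where "\<gamma> = \<beta> - e"
  have le_e: "lk e i \<le> lk \<beta> i" for i using j by (auto simp: e_def lookup_single when_def)
  have beq: "\<gamma> + e = \<beta>" unfolding \<gamma>_def
    by (rule poly_mapping_eqI) (simp add: lookup_add lookup_minus le_e)
  have mg: "mdeg \<gamma> + r j = mdeg \<beta>" using mdeg_minus[of e \<beta>, OF le_e] by (simp add: \<gamma>_def e_def)
  have kg: "ks \<gamma> \<subseteq> S" using keys_minus_nat[of \<beta> e] kb by (simp add: \<gamma>_def)
  define T' where "T' = sg (a,\<gamma>) s"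
  define R1 where "R1 = (\<Sum>c\<in>ks C. \<Sum>k\<in>Kset \<gamma> c - {0}. sg (a + c - k, \<gamma> + e - k) (s * lk C c * wcoef \<gamma> c k))"
  define R2 where "R2 = (\<Sum>k<r j. weyl_mult T' (poly_D (q j * l j k) (sg j k)))"
  have eq1: "weyl_mult (poly_to_weyl C) (sg (a,\<beta>) s) = weyl_mult T' (poly_D C e) - R1"
  proof -
    have "weyl_mult T' (poly_D C e) = (\<Sum>c\<in>ks C. weyl_mult T' (sg (c,e) (lk C c)))"
      unfolding poly_D_decomp[of C] wm_sum_right ..
    also have "\<dots> = (\<Sum>c\<in>ks C. sg (a + c, \<beta>) (s * lk C c)) + R1"
      unfolding T'_def wm_single_single_split R1_def sum.distrib beq by simp
    finally have "weyl_mult T' (poly_D C e) = (\<Sum>c\<in>ks C. sg (a + c, \<beta>) (s * lk C c)) + R1" .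
    moreover have "weyl_mult (poly_to_weyl C) (sg (a,\<beta>) s) = (\<Sum>c\<in>ks C. sg (a + c, \<beta>) (s * lk C c))"
      unfolding wm_poly_single by (intro sum.cong refl) (simp add: add.commute mult.commute)
    ultimately show ?thesis by simp
  qed
  have eq2: "weyl_mult T' (G j) = weyl_mult T' (poly_D C e) + R2"
  proof -
    have ins: "{..r j} = insert (r j) {..<r j}" by auto
    have "G j = poly_D (q j * l j (r j)) (sg j (r j)) + (\<Sum>k<r j. poly_D (q j * l j k) (sg j k))"
      unfolding G_eq ins by (rule sum.insert) auto
    also have "\<dots> = (\<Sum>k<r j. poly_D (q j * l j k) (sg j k)) + poly_D C e"
      unfolding e_def C_eq[OF j(1), symmetric] by (rule add.commute)
    finally have "G j = (\<Sum>k<r j. poly_D (q j * l j k) (sg j k)) + poly_D C e" .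
    then show ?thesis unfolding R2_def by (simp only: wm_add_right wm_sum_right add.commute)
  qed
  have eq3: "weyl_mult (poly_to_weyl C) (sg (a,\<beta>) s) = weyl_mult T' (G j) + - (R1 + R2)"
    using eq1 eq2 by (simp add: algebra_simps)
  have R1k: "ks R1 \<subseteq> HQ (t + dC) (int m)"
    unfolding R1_def
  proof (intro ks_sum_sub ks_sg_sub)
    fix c k assume c: "c \<in> ks C" and k: "k \<in> Kset \<gamma> c - {0}"
    have "ks c \<subseteq> {1..n}" using C_polyn c by (auto simp: is_poly_n_def)
    moreover have "mdeg c \<le> dC" using tdeg_ge[OF c] tdeg_C by simp
    moreover have "ks (\<gamma> + e) \<subseteq> S" using beq kb by simp
    moreover have "mdeg (\<gamma> + e - k) \<le> m"
    proof -
      have "lk k i \<le> lk (\<gamma> + e) i" for i using Kset_le(1)[of k \<gamma> c i] k by (simp add: lookup_add)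
      then have "mdeg (\<gamma> + e - k) + mdeg k = mdeg \<beta>" using mdeg_minus[of k "\<gamma> + e"] beq by simp
      moreover have "mdeg k \<noteq> 0" using k mdeg_eq_0 by blast
      ultimately show ?thesis using mb by linarith
    qed
    ultimately show "(a + c - k, \<gamma> + e - k) \<in> HQ (t + dC) (int m)"
      using elem_HQ ka by blast
  qed
  have R2k: "ks R2 \<subseteq> HQ (t + dC) (int m)"
    unfolding R2_def T'_def wm_T_polyD
  proof (intro ks_sum_sub ks_sg_sub)
    fix kk c k assume kk: "kk \<in> {..<r j}" and c: "c \<in> ks (q j * l j kk)" and k: "k \<in> Kset \<gamma> c"
    have kkr: "kk \<le> r j" using kk by simp
    have "ks c \<subseteq> {1..n}" using ql_props(2)[OF j(1) kkr] c by (auto simp: is_poly_n_def)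
    moreover have "mdeg c \<le> dC" using tdeg_ge[OF c] ql_props(1)[OF j(1) kkr] by simp
    moreover have "ks (\<gamma> + sg j kk) \<subseteq> S" using keys_add_sub[of \<gamma> "sg j kk"] kg j(1) by (auto split: if_splits)
    moreover have "mdeg (\<gamma> + sg j kk - k) \<le> m"
      using mdeg_minus_le[of "\<gamma> + sg j kk" k] mg mb kk by (simp add: mdeg_add)
    ultimately show "(a + c - k, \<gamma> + sg j kk - k) \<in> HQ (t + dC) (int m)"
      using elem_HQ ka by blast
  qed
  have Rk: "- (R1 + R2) \<in> Hcal n S r (t + dC) (int m)"
    unfolding Hcal_HQ keys_minus using keys_add_sub R1k R2k keys_add[of R1 R2] by blast
  obtain u' where u': "u = Suc u'" using u by (cases u) auto
  have "int m \<le> int u'" using u u' by simp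
  from IH[OF this Rk] obtain h'' g'' where hg: "h'' \<in> Hcal n S r (t + dC + u' * dC) 0" "g'' \<in> JJ"
    "weyl_mult (poly_to_weyl (C ^ u')) (- (R1 + R2)) = h'' + g''" by blast
  have "weyl_mult (poly_to_weyl (C^u)) (sg (a,\<beta>) s) =
      weyl_mult (poly_to_weyl (C^u')) (weyl_mult (poly_to_weyl C) (sg (a,\<beta>) s))"
    unfolding u' power_Suc2 wm_poly_mult ..
  also have "\<dots> = weyl_mult (weyl_mult (poly_to_weyl (C^u')) T') (G j) + (h'' + g'')"
    unfolding eq3 wm_add_right wm_assoc_poly hg(3) ..
  finally have eq: "weyl_mult (poly_to_weyl (C^u)) (sg (a,\<beta>) s) =
     h'' + (weyl_mult (weyl_mult (poly_to_weyl (C^u')) T') (G j) + g'')" by (simp add: ac_simps)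
  have eqT: "weyl_mult (poly_to_weyl (C^u')) T' = (\<Sum>c\<in>ks (C^u'). sg (c + a, \<gamma>) (lk (C^u') c * s))"
    unfolding T'_def by (rule wm_poly_single)
  have "in_Wn n (weyl_mult (poly_to_weyl (C^u')) T')"
    unfolding in_Wn_def
  proof
    fix x assume "x \<in> ks (weyl_mult (poly_to_weyl (C^u')) T')"
    then have "x \<in> ks (\<Sum>c\<in>ks (C^u'). sg (c + a, \<gamma>) (lk (C^u') c * s))" by (simp only: eqT)
    then have "x \<in> (\<Union>c\<in>ks (C^u'). ks (sg (c + a, \<gamma>) (lk (C ^ u') c * s)))"
      using keys_sum[of "\<lambda>c. sg (c + a, \<gamma>) (lk (C^u') c * s)" "ks (C^u')"] by blast
    then obtain c where c: "c \<in> ks (C^u')" "x \<in> ks (sg (c + a, \<gamma>) (lk (C ^ u') c * s))"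
      by blast
    then have c2: "x = (c + a, \<gamma>)" by (simp split: if_splits)
    have "ks c \<subseteq> {1..n}" using polyn_power[OF C_polyn, of u'] c by (auto simp: is_poly_n_def)
    then show "case x of (a, b) \<Rightarrow> ks a \<subseteq> {1..n} \<and> ks b \<subseteq> {1..n}"
      using c2 keys_add_sub[of c a] ka(1) kg S(1) by auto
  qed
  then have gJ: "weyl_mult (weyl_mult (poly_to_weyl (C^u')) T') (G j) + g'' \<in> JJ"
    by (intro Jadd Jgen j(1) hg(2))
  have "t + dC + u' * dC = t + u * dC" using u' by simp
  then have hH: "h'' \<in> Hcal n S r (t + u * dC) 0" using hg(1) by metis
  show ?thesis
  proof (rule bexI[OF _ hH], rule bexI[OF _ gJ])
    show "weyl_mult (poly_to_weyl (C^u)) (sg (a,\<beta>) s) =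
     h'' + (weyl_mult (weyl_mult (poly_to_weyl (C^u')) T') (G j) + g'')" by (rule eq)
  qed
qed

lemma main: "int m \<le> int u \<Longrightarrow> h \<in> Hcal n S r t (int m) \<Longrightarrow>
   \<exists>h'\<in>Hcal n S r (t + u*dC) 0. \<exists>g\<in>JJ. weyl_mult (poly_to_weyl (C^u)) h = h' + g"
proof (induction m arbitrary: u t h)
  case 0
  show ?case
  proof (rule lift)
    fix x assume "x \<in> ks h"
    then obtain a b where ab: "x = (a,b)" "(a,b) \<in> HQ t 0" using 0(2) Hcal_HQ by (cases x) auto
    show "\<exists>h'\<in>Hcal n S r (t + u * dC) 0. \<exists>g\<in>JJ. weyl_mult (poly_to_weyl (C ^ u)) (sg x (lk h x)) = h' + g"
    proof -
      have "weyl_mult (poly_to_weyl (C ^ u)) (sg x (lk h x)) \<in> Hcal n S r (t + u * dC) 0"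
        using base[OF ab(2)] ab(1) by simp
      then show ?thesis using J0 by (metis add.right_neutral)
    qed
  qed
next
  case (Suc m)
  show ?case
  proof (rule lift)
    fix x assume "x \<in> ks h"
    then obtain a b where ab: "x = (a,b)" "(a,b) \<in> HQ t (int (Suc m))" using Suc(3) Hcal_HQ by (cases x) auto
    show "\<exists>h'\<in>Hcal n S r (t + u * dC) 0. \<exists>g\<in>JJ. weyl_mult (poly_to_weyl (C ^ u)) (sg x (lk h x)) = h' + g"
    proof (cases "(a,b) \<in> HQ t 0")
      case True
      have "weyl_mult (poly_to_weyl (C ^ u)) (sg x (lk h x)) \<in> Hcal n S r (t + u * dC) 0"
        using base[OF True] ab(1) by simp
      then show ?thesis using J0 by (metis add.right_neutral)
    next
      case False
      have "Suc m \<le> u" using Suc(2) by simp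
      from step[OF Suc.IH ab(2) False this] show ?thesis using ab(1) by simp
    qed
  qed
qed

end

theorem lemma3p13:
  fixes n :: nat and S :: "nat set" and r :: "nat \<Rightarrow> nat"
    and l :: "nat \<Rightarrow> nat \<Rightarrow> 'k::field_char_0 mpoly" and C :: "'k mpoly"
  assumes S: "S \<subseteq> {1..n}" "S \<noteq> {}"
    and lpoly: "\<And>j k. j \<in> S \<Longrightarrow> k \<le> r j \<Longrightarrow> is_poly_n n (l j k)"
    and lead: "\<And>j. j \<in> S \<Longrightarrow> l j (r j) \<noteq> 0"
    and C: "is_lcm_n n C S (\<lambda>j. l j (r j))"
  defines "dC \<equiv> (\<Sum>j\<in>S. Max ((\<lambda>k. tdeg (l j k)) ` {..r j}))"
    and "J \<equiv> left_ideal_gen n S (\<lambda>j. weyl_mult (poly_to_weyl (poly_quot C (l j (r j)))) (Lop l r j))"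
  shows "(\<forall>u t (v::int). v \<le> int u \<longrightarrow>
            (\<forall>h\<in>Hcal n S r t v. \<exists>h'\<in>Hcal n S r (t + u * dC) 0. \<exists>g\<in>J.
               weyl_mult (poly_to_weyl (C ^ u)) h = h' + g))
       \<and> (\<forall>\<alpha>::nat \<Rightarrow>\<^sub>0 nat. Poly_Mapping.keys \<alpha> \<subseteq> S \<longrightarrow>
            (\<exists>h'\<in>Hcal n S r (mdeg \<alpha> * dC) 0. \<exists>g\<in>J.
               weyl_mult (poly_to_weyl (C ^ mdeg \<alpha>)) (Poly_Mapping.single (0, \<alpha>) 1) = h' + g))"
proof -
  interpret L: L313 n S r l C
    by (unfold_locales) (use S lpoly lead C in auto)
  have dCe: "dC = L.dC" unfolding dC_def L.dC_def L.dd_def ..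
  have Je: "J = L.JJ" unfolding J_def L.JJ_def L.G_def L.q_def ..
  have P1: "\<forall>u t (v::int). v \<le> int u \<longrightarrow>
            (\<forall>h\<in>Hcal n S r t v. \<exists>h'\<in>Hcal n S r (t + u * dC) 0. \<exists>g\<in>J.
               weyl_mult (poly_to_weyl (C ^ u)) h = h' + g)"
  proof (intro allI impI ballI)
    fix u t and v :: int and h :: "'k weyl" assume v: "v \<le> int u" and h: "h \<in> Hcal n S r t v"
    show "\<exists>h'\<in>Hcal n S r (t + u * dC) 0. \<exists>g\<in>J. weyl_mult (poly_to_weyl (C ^ u)) h = h' + g"
    proof (cases "v \<le> 0")
      case True
      have "h \<in> Hcal n S r t (int 0)" using h True unfolding Hcal_def by force
      from L.main[OF _ this, of u] show ?thesis unfolding dCe Je by simp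
    next
      case False
      then have "v = int (nat v)" "int (nat v) \<le> int u" using v by auto
      with h have "h \<in> Hcal n S r t (int (nat v))" by simp
      from L.main[OF \<open>int (nat v) \<le> int u\<close> this] show ?thesis unfolding dCe Je by simp
    qed
  qed
  have P2: "\<forall>\<alpha>::nat \<Rightarrow>\<^sub>0 nat. Poly_Mapping.keys \<alpha> \<subseteq> S \<longrightarrow>
            (\<exists>h'\<in>Hcal n S r (mdeg \<alpha> * dC) 0. \<exists>g\<in>J.
               weyl_mult (poly_to_weyl (C ^ mdeg \<alpha>)) (Poly_Mapping.single (0, \<alpha>) 1) = h' + g)"
  proof (intro allI impI)
    fix \<alpha> :: "nat \<Rightarrow>\<^sub>0 nat" assume a: "Poly_Mapping.keys \<alpha> \<subseteq> S"
    have "Poly_Mapping.single (0, \<alpha>) (1::'k) \<in> Hcal n S r 0 (int (mdeg \<alpha>))"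
      using a unfolding Hcal_def by simp
    with P1 have "\<exists>h'\<in>Hcal n S r (0 + mdeg \<alpha> * dC) 0. \<exists>g\<in>J.
               weyl_mult (poly_to_weyl (C ^ mdeg \<alpha>)) (Poly_Mapping.single (0, \<alpha>) 1) = h' + g"
      by blast
    then show "\<exists>h'\<in>Hcal n S r (mdeg \<alpha> * dC) 0. \<exists>g\<in>J.
               weyl_mult (poly_to_weyl (C ^ mdeg \<alpha>)) (Poly_Mapping.single (0, \<alpha>) 1) = h' + g" by simp
  qed
  from P1 P2 show ?thesis by blast
qed

end
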